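(* Let $\mathcal{D} \subset \mathbb{R}^d$ be a finite nonempty set of vectors and let $q \in \mathbb{R}^d$. Then there exists a scalar $\bar{\mu} \in \mathbb{R}$ such that for every $\mu > \max(\bar{\mu}, 0)$, every nearest neighbor of $q' = \mu q$ in $\mathcal{D}$ is a maximum inner product solution for $q$; that is, if $p \in \mathcal{D}$ satisfies $\lVert p - \mu q\rVert \le \lVert p' - \mu q\rVert$ for all $p' \in \mathcal{D}$, then $\langle p, q\rangle \ge \langle p', q\rangle$ for all $p' \in \mathcal{D}$.
   Context: $\lVert\cdot\rVert$ is the Euclidean ($L_2$) norm and $\langle\cdot,\cdot\rangle$ the standard inner product on $\mathbb{R}^d$. A nearest neighbor of a vector $x$ in $\mathcal{D}$ is a point of $\mathcal{D}$ minimizing the Euclidean distance to $x$; a maximum inner product solution for $q$ is a point of $\mathcal{D}$ maximizing $\langle \cdot, q\rangle$ over $\mathcal{D}$. *)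

theory Defs
  imports "HOL-Analysis.Analysis"
begin

end

theory Submission
  imports Defs
begin

theorem theorem1:
  fixes D :: "(real ^ 'd) set" and q :: "real ^ 'd"
  assumes "finite D" and "D \<noteq> {}"
  shows "\<exists>mu_bar :: real. \<forall>mu :: real. mu > max mu_bar 0 \<longrightarrow>
           (\<forall>p\<in>D. (\<forall>p'\<in>D. norm (p - mu *\<^sub>R q) \<le> norm (p' - mu *\<^sub>R q))
              \<longrightarrow> (\<forall>p'\<in>D. inner p q \<ge> inner p' q))"
proof -
  define B where "B = (\<Sum>x\<in>D. (norm x)^2)"
  define P where "P = {(a,b). a \<in> D \<and> b \<in> D \<and> inner a q > inner b q}"
  define f where "f = (\<lambda>(a,b). B / (inner a q - inner b q))"
  have finP: "finite P" unfolding P_def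
    by (rule finite_subset[of _ "D \<times> D"]) (use assms(1) in auto)
  have B0: "\<And>x. x \<in> D \<Longrightarrow> (norm x)^2 \<le> B"
    unfolding B_def using assms(1) by (intro member_le_sum) auto
  have fnn: "\<And>z. z \<in> P \<Longrightarrow> 0 \<le> f z"
  proof -
    fix z assume "z \<in> P"
    then obtain a b where z: "z = (a,b)" "a \<in> D" "inner a q > inner b q" unfolding P_def by auto
    have "0 \<le> B" using B0[OF z(2)] by (smt (verit) zero_le_power2)
    thus "0 \<le> f z" using z by (simp add: f_def)
  qed
  show ?thesis
  proof (intro exI[of _ "sum f P"] allI impI ballI)
    fix mu :: real and p p'
    assume mu: "mu > max (sum f P) 0" and p: "p \<in> D"
      and nn: "\<forall>p'\<in>D. norm (p - mu *\<^sub>R q) \<le> norm (p' - mu *\<^sub>R q)" and p': "p' \<in> D"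
    show "inner p q \<ge> inner p' q"
    proof (rule ccontr)
      assume "\<not> ?thesis"
      hence lt: "inner p' q - inner p q > 0" by simp
      hence inP: "(p',p) \<in> P" using p p' by (auto simp: P_def)
      have "f (p',p) \<le> sum f P" by (rule member_le_sum[OF inP fnn finP]) auto
      hence "B / (inner p' q - inner p q) < mu" using mu by (simp add: f_def)
      hence b1: "B < mu * (inner p' q - inner p q)" using lt by (simp add: divide_less_eq)
      have "norm (p - mu *\<^sub>R q) \<le> norm (p' - mu *\<^sub>R q)" using nn p' by blast
      hence "(norm (p - mu *\<^sub>R q))^2 \<le> (norm (p' - mu *\<^sub>R q))^2"
        by (simp add: power_mono)
      hence "(norm p)^2 - 2*mu*inner p q \<le> (norm p')^2 - 2*mu*inner p' q"
        by (simp add: power2_norm_eq_inner inner_diff_left inner_diff_right inner_commute algebra_simps)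
      hence "2*mu*(inner p' q - inner p q) \<le> (norm p')^2 - (norm p)^2"
        by (simp add: algebra_simps)
      moreover have "(norm p')^2 \<le> B" using B0 p' by blast
      moreover have "0 \<le> (norm p)^2" by simp
      moreover have "0 < mu * (inner p' q - inner p q)" using mu lt by simp
      ultimately show False using b1 by linarith
    qed
  qed
qed

end
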